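(* Let $\mathcal{C}$ be a permutation class (resp. polyomino class). If the $p$-basis of $\mathcal{C}$ is also a minimal $m$-basis of $\mathcal{C}$, then it is the unique minimal $m$-basis of $\mathcal{C}$.
   Context: Binary matrices have entries in $\{0,1\}$; $M'\preccurlyeq M$ (submatrix order) means $M'$ is obtained from $M$ by deleting some rows and/or columns. A permutation $\sigma$ of $\{1,\dots,n\}$ is identified with its permutation matrix ($M_\sigma(i,j)=1$ iff $i=\sigma(j)$); a permutation class is a set of permutations closed under taking submatrices that are permutation matrices (i.e. under taking patterns). A polyomino is a finite edge-connected union of unit cells of $\mathbb{Z}^2$ up to translation, identified with the binary matrix of its minimal bounding rectangle ($1$ for cells, $0$ otherwise); a polyomino class is a set of polyominoes closed under taking submatrices that are polyominoes. $Av(\mathcal{M})$ denotes the set of permutations (resp. polyominoes) with no submatrix in $\mathcal{M}$. The $p$-basis of a class $\mathcal{C}$ is the set of permutations (resp. polyominoes) not in $\mathcal{C}$ that are minimal for the submatrix order among permutations (resp. polyominoes) not in $\mathcal{C}$; it is the unique antichain $\mathcal{B}$ of permutations (resp. polyominoes) with $\mathcal{C}=Av(\mathcal{B})$. An $m$-basis of $\mathcal{C}$ is an antichain $\mathcal{M}$ of binary matrices (for $\preccurlyeq$) with $\mathcal{C}=Av(\mathcal{M})$. A minimal $m$-basis of $\mathcal{C}$ is an $m$-basis $\mathcal{M}$ such that (1) no strict subset $\mathcal{M}'\subsetneq\mathcal{M}$ satisfies $\mathcal{C}=Av(\mathcal{M}')$, and (2) for every $M\in\mathcal{M}$ and every submatrix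 $M'\preccurlyeq M$, either $M'=M$ or $\mathcal{C}\neq Av\big((\mathcal{M}\setminus\{M\})\cup\{M'\}\big)$. *)

theory Defs
  imports Main
begin

text \<open>A binary matrix with m rows and n columns is represented as a triple (m, n, f),
  where f i j is the entry in row i, column j (0-based); entries outside the
  m x n range are required to be False (normal form), so equality of triples is
  equality of matrices.\<close>

type_synonym bmat = "nat \<times> nat \<times> (nat \<Rightarrow> nat \<Rightarrow> bool)"

definition valid_mat :: "bmat \<Rightarrow> bool" where
  "valid_mat M \<longleftrightarrow> (case M of (m, n, f) \<Rightarrow> (\<forall>i j. f i j \<longrightarrow> i < m \<and> j < n))"

definition submat :: "bmat \<Rightarrow> bmat \<Rightarrow> bool" (infix "\<preceq>\<^sub>m" 50) where
  "submat M' M \<longleftrightarrow> valid_mat M' \<and> valid_mat M \<and>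
     (case M' of (m', n', f') \<Rightarrow> case M of (m, n, f) \<Rightarrow>
       (\<exists>r c. strict_mono_on {..<m'} r \<and> r ` {..<m'} \<subseteq> {..<m} \<and>
              strict_mono_on {..<n'} c \<and> c ` {..<n'} \<subseteq> {..<n} \<and>
              (\<forall>i<m'. \<forall>j<n'. f' i j = f (r i) (c j))))"

text \<open>Permutation matrices (including the empty permutation of size 0).\<close>

definition perm_mats :: "bmat set" where
  "perm_mats = {(m, n, f) | m n f. valid_mat (m, n, f) \<and> m = n \<and>
      (\<forall>j<n. \<exists>!i. i < m \<and> f i j) \<and> (\<forall>i<m. \<exists>!j. j < n \<and> f i j)}"

text \<open>Polyominoes: nonempty edge-connected cell sets, identified with the binary
  matrix of their minimal bounding rectangle (so every row and column has a 1).\<close>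

definition cell_adj :: "nat \<times> nat \<Rightarrow> nat \<times> nat \<Rightarrow> bool" where
  "cell_adj a b \<longleftrightarrow> (case a of (i, j) \<Rightarrow> case b of (i', j') \<Rightarrow>
      (i = i' \<and> (j' = j + 1 \<or> j = j' + 1)) \<or> (j = j' \<and> (i' = i + 1 \<or> i = i' + 1)))"

definition polyomino_mats :: "bmat set" where
  "polyomino_mats = {(m, n, f) | m n f. valid_mat (m, n, f) \<and> 0 < m \<and> 0 < n \<and>
      (\<forall>i<m. \<exists>j<n. f i j) \<and> (\<forall>j<n. \<exists>i<m. f i j) \<and>
      (\<forall>a b. f (fst a) (snd a) \<longrightarrow> f (fst b) (snd b) \<longrightarrow>
         (\<lambda>x y. f (fst x) (snd x) \<and> f (fst y) (snd y) \<and> cell_adj x y)\<^sup>*\<^sup>* a b)}"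

text \<open>Obj is the universe of objects (permutations or polyominoes).\<close>

definition is_class :: "bmat set \<Rightarrow> bmat set \<Rightarrow> bool" where
  "is_class Obj C \<longleftrightarrow> C \<subseteq> Obj \<and> (\<forall>M\<in>C. \<forall>M'\<in>Obj. M' \<preceq>\<^sub>m M \<longrightarrow> M' \<in> C)"

definition Av :: "bmat set \<Rightarrow> bmat set \<Rightarrow> bmat set" where
  "Av Obj Ms = {P \<in> Obj. \<forall>M\<in>Ms. \<not> M \<preceq>\<^sub>m P}"

definition p_basis :: "bmat set \<Rightarrow> bmat set \<Rightarrow> bmat set" where
  "p_basis Obj C = {P \<in> Obj. P \<notin> C \<and> (\<forall>Q\<in>Obj. Q \<preceq>\<^sub>m P \<and> Q \<notin> C \<longrightarrow> Q = P)}"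

definition mat_antichain :: "bmat set \<Rightarrow> bool" where
  "mat_antichain Ms \<longleftrightarrow> (\<forall>M\<in>Ms. valid_mat M) \<and>
      (\<forall>A\<in>Ms. \<forall>B\<in>Ms. A \<preceq>\<^sub>m B \<longrightarrow> A = B)"

definition m_basis :: "bmat set \<Rightarrow> bmat set \<Rightarrow> bmat set \<Rightarrow> bool" where
  "m_basis Obj C Ms \<longleftrightarrow> mat_antichain Ms \<and> C = Av Obj Ms"

definition minimal_m_basis :: "bmat set \<Rightarrow> bmat set \<Rightarrow> bmat set \<Rightarrow> bool" where
  "minimal_m_basis Obj C Ms \<longleftrightarrow> m_basis Obj C Ms \<and>
     (\<forall>Ms'. Ms' \<subset> Ms \<longrightarrow> C \<noteq> Av Obj Ms') \<and>
     (\<forall>M\<in>Ms. \<forall>M'. M' \<preceq>\<^sub>m M \<longrightarrow> M' = M \<or> C \<noteq> Av Obj ((Ms - {M}) \<union> {M'}))"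

end

theory Submission
  imports Defs
begin

lemma submat_refl: "valid_mat M \<Longrightarrow> M \<preceq>\<^sub>m M"
  unfolding submat_def
  by (cases M) (auto intro!: exI[of _ id] simp: strict_mono_on_def)

lemma submat_trans:
  assumes "A \<preceq>\<^sub>m B" "B \<preceq>\<^sub>m D" shows "A \<preceq>\<^sub>m D"
proof -
  obtain ma na fa where A: "A = (ma,na,fa)" by (cases A) auto
  obtain mb nb fb where B: "B = (mb,nb,fb)" by (cases B) auto
  obtain md nd fd where D: "D = (md,nd,fd)" by (cases D) auto
  from assms(1) obtain r c where r: "strict_mono_on {..<ma} r" "r ` {..<ma} \<subseteq> {..<mb}"
    "strict_mono_on {..<na} c" "c ` {..<na} \<subseteq> {..<nb}"
    "\<forall>i<ma. \<forall>j<na. fa i j = fb (r i) (c j)" and vA: "valid_mat A"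
    unfolding submat_def A B by auto
  from assms(2) obtain r' c' where r': "strict_mono_on {..<mb} r'" "r' ` {..<mb} \<subseteq> {..<md}"
    "strict_mono_on {..<nb} c'" "c' ` {..<nb} \<subseteq> {..<nd}"
    "\<forall>i<mb. \<forall>j<nb. fb i j = fd (r' i) (c' j)" and vD: "valid_mat D"
    unfolding submat_def B D by auto
  have "strict_mono_on {..<ma} (r' \<circ> r)"
    using r(1,2) r'(1) unfolding strict_mono_on_def by (auto simp: image_subset_iff)
  moreover have "strict_mono_on {..<na} (c' \<circ> c)"
    using r(3,4) r'(3) unfolding strict_mono_on_def by (auto simp: image_subset_iff)
  moreover have "(r' \<circ> r) ` {..<ma} \<subseteq> {..<md}" using r(2) r'(2) by (auto simp: image_subset_iff)
  moreover have "(c' \<circ> c) ` {..<na} \<subseteq> {..<nd}" using r(4) r'(4) by (auto simp: image_subset_iff)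
  moreover have "\<forall>i<ma. \<forall>j<na. fa i j = fd ((r' \<circ> r) i) ((c' \<circ> c) j)"
    using r(2,4,5) r'(5) by (auto simp: image_subset_iff)
  ultimately show ?thesis using vA vD unfolding submat_def A D by blast
qed

lemma smono_grow:
  assumes "strict_mono_on {..<m} (r::nat\<Rightarrow>nat)"
  shows "i \<le> j \<Longrightarrow> j < m \<Longrightarrow> r i + (j - i) \<le> r j"
proof (induction j)
  case 0 then show ?case by simp
next
  case (Suc j)
  show ?case
  proof (cases "i = Suc j")
    case False
    then have "i \<le> j" using Suc by simp
    with Suc have "r i + (j - i) \<le> r j" by simp
    moreover have "r j < r (Suc j)" using assms Suc.prems unfolding strict_mono_on_def by simp
    ultimately show ?thesis using \<open>i \<le> j\<close> by linarith
  qed simp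
qed

lemma smono_id:
  assumes "strict_mono_on {..<m} (r::nat\<Rightarrow>nat)" "r ` {..<m} \<subseteq> {..<m}" "i < m"
  shows "r i = i"
proof -
  have "r 0 + (i - 0) \<le> r i" using smono_grow[OF assms(1), of 0 i] assms(3) by simp
  moreover have "r i + (m - 1 - i) \<le> r (m - 1)" using smono_grow[OF assms(1), of i "m-1"] assms(3) by simp
  moreover have "m - 1 \<in> {..<m}" using assms(3) by simp
  hence "r (m - 1) < m" using assms(2) by auto
  ultimately show ?thesis using assms(3) by linarith
qed

lemma submat_dims:
  assumes "(m',n',f') \<preceq>\<^sub>m (m,n,f)" shows "m' \<le> m \<and> n' \<le> n"
proof -
  from assms obtain r c where r: "strict_mono_on {..<m'} r" "r ` {..<m'} \<subseteq> {..<m}"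
    "strict_mono_on {..<n'} c" "c ` {..<n'} \<subseteq> {..<n}"
    unfolding submat_def by auto
  have "inj_on r {..<m'}" using r(1) strict_mono_on_imp_inj_on by blast
  hence "card {..<m'} \<le> card {..<m}" using card_inj_on_le r(2) by blast
  moreover have "inj_on c {..<n'}" using r(3) strict_mono_on_imp_inj_on by blast
  hence "card {..<n'} \<le> card {..<n}" using card_inj_on_le r(4) by blast
  ultimately show ?thesis by simp
qed

lemma submat_same:
  assumes "(m,n,f') \<preceq>\<^sub>m (m,n,f)" shows "f' = f"
proof -
  from assms obtain r c where r: "strict_mono_on {..<m} r" "r ` {..<m} \<subseteq> {..<m}"
    "strict_mono_on {..<n} c" "c ` {..<n} \<subseteq> {..<n}"
    "\<forall>i<m. \<forall>j<n. f' i j = f (r i) (c j)" and v: "valid_mat (m,n,f')" "valid_mat (m,n,f)"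
    unfolding submat_def by auto
  show ?thesis
  proof (intro ext)
    fix i j
    show "f' i j = f i j"
    proof (cases "i < m \<and> j < n")
      case True then show ?thesis using r smono_id[OF r(1,2)] smono_id[OF r(3,4)] by simp
    next
      case False then show ?thesis using v unfolding valid_mat_def by auto
    qed
  qed
qed

lemma exists_basis_below:
  assumes cls: "is_class Obj C" and P: "P \<in> Obj" "P \<notin> C" "valid_mat P"
  shows "\<exists>Q\<in>p_basis Obj C. Q \<preceq>\<^sub>m P"
proof -
  let ?S = "\<lambda>Q. Q \<in> Obj \<and> Q \<preceq>\<^sub>m P \<and> Q \<notin> C"
  have "?S P" using P submat_refl by auto
  then obtain Q where Q: "?S Q" and minQ: "\<forall>y. ?S y \<longrightarrow> fst Q + fst (snd Q) \<le> fst y + fst (snd y)"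
    using ex_has_least_nat[of ?S P "\<lambda>Q. fst Q + fst (snd Q)"] by blast
  have "Q \<in> p_basis Obj C"
    unfolding p_basis_def
  proof (intro CollectI conjI ballI impI)
    show "Q \<in> Obj" "Q \<notin> C" using Q by auto
    fix Q' assume a0: "Q' \<in> Obj" and a1: "Q' \<preceq>\<^sub>m Q \<and> Q' \<notin> C"
    from a0 a1 have a: "Q' \<in> Obj \<and> Q' \<preceq>\<^sub>m Q \<and> Q' \<notin> C" by blast
    then have "?S Q'" using Q submat_trans by blast
    hence le: "fst Q + fst (snd Q) \<le> fst Q' + fst (snd Q')" using minQ by blast
    obtain m n f where Qe: "Q = (m,n,f)" by (cases Q) auto
    obtain m' n' f' where Qe': "Q' = (m',n',f')" by (cases Q') auto
    have "m' \<le> m \<and> n' \<le> n" using a submat_dims Qe Qe' by blast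
    with le have "m' = m" "n' = n" using Qe Qe' by auto
    then have "(m,n,f') \<preceq>\<^sub>m (m,n,f)" using a Qe Qe' by simp
    then have "f' = f" by (rule submat_same)
    then show "Q' = Q" using Qe Qe' \<open>m' = m\<close> \<open>n' = n\<close> by simp
  qed
  then show ?thesis using Q by blast
qed

theorem proposition6:
  assumes "Obj = perm_mats \<or> Obj = polyomino_mats"
    and "is_class Obj C"
    and "minimal_m_basis Obj C (p_basis Obj C)"
  shows "\<forall>Ms. minimal_m_basis Obj C Ms \<longrightarrow> Ms = p_basis Obj C"
proof (intro allI impI)
  fix Ms assume Ms: "minimal_m_basis Obj C Ms"
  let ?B = "p_basis Obj C"
  have CMs: "C = Av Obj Ms" using Ms unfolding minimal_m_basis_def m_basis_def by blast
  have CB: "C = Av Obj ?B" using assms(3) unfolding minimal_m_basis_def m_basis_def by blast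
  have minB: "\<forall>M\<in>?B. \<forall>M'. M' \<preceq>\<^sub>m M \<longrightarrow> M' = M \<or> C \<noteq> Av Obj ((?B - {M}) \<union> {M'})"
    using assms(3) unfolding minimal_m_basis_def by blast
  have sub: "Ms \<subseteq> ?B"
  proof
    fix M assume M: "M \<in> Ms"
    have "Ms - {M} \<subset> Ms" using M by blast
    hence "C \<noteq> Av Obj (Ms - {M})" using Ms unfolding minimal_m_basis_def by blast
    moreover have "Av Obj Ms \<subseteq> Av Obj (Ms - {M})" unfolding Av_def by auto
    ultimately obtain P where P: "P \<in> Av Obj (Ms - {M})" "P \<notin> C" using CMs by blast
    have PO: "P \<in> Obj" using P unfolding Av_def by auto
    have "M \<preceq>\<^sub>m P" using P CMs M unfolding Av_def by auto
    hence vP: "valid_mat P" unfolding submat_def by auto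
    obtain Q where Q: "Q \<in> ?B" "Q \<preceq>\<^sub>m P" using exists_basis_below[OF assms(2) PO P(2) vP] by blast
    have QO: "Q \<in> Obj" "Q \<notin> C" using Q unfolding p_basis_def by auto
    then obtain M' where M': "M' \<in> Ms" "M' \<preceq>\<^sub>m Q" using CMs unfolding Av_def by auto
    hence "M' \<preceq>\<^sub>m P" using Q submat_trans by blast
    hence "M' = M" using P(1) M' unfolding Av_def by auto
    with M' have MQ: "M \<preceq>\<^sub>m Q" by simp
    have "C = Av Obj ((?B - {Q}) \<union> {M})"
    proof (intro set_eqI iffI)
      fix X assume X: "X \<in> C"
      then have "X \<in> Av Obj ?B" using CB by simp
      moreover have "X \<in> Av Obj Ms" using X CMs by simp
      ultimately show "X \<in> Av Obj ((?B - {Q}) \<union> {M})" using M unfolding Av_def by auto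
    next
      fix X assume X: "X \<in> Av Obj ((?B - {Q}) \<union> {M})"
      have "\<not> Q \<preceq>\<^sub>m X" using X MQ submat_trans unfolding Av_def by blast
      then have "X \<in> Av Obj ?B" using X unfolding Av_def by auto
      then show "X \<in> C" using CB by simp
    qed
    then have "M = Q" using minB Q(1) MQ by blast
    then show "M \<in> ?B" using Q by simp
  qed
  show "Ms = ?B"
  proof (rule ccontr)
    assume "Ms \<noteq> ?B"
    with sub have "Ms \<subset> ?B" by blast
    hence "C \<noteq> Av Obj Ms" using assms(3) unfolding minimal_m_basis_def by blast
    with CMs show False by simp
  qed
qed

end
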